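(* $\mathrm T_s(\mathbb F) \not\subseteq \mathsf{AC}^0$. In particular, the language $\mathrm{MAJ}=\{w\in\{0,1\}^+ : \#_1(w) > \#_0(w)\}$, where $\#_\sigma(w)$ is the number of occurrences of $\sigma$ in $w$, is recognized by a transformer over floats with saturated attention and size-preserving embedding and activation functions, yet is not in $\mathsf{AC}^0$.
   Context: Datatypes. All values are binary strings. A float is a rational number whose denominator is a power of $2$, encoded as a sign bit together with a pair $\langle p,q\rangle$ of unsigned binary integers (value $(2s-1)p/q$, $q$ a power of $2$); addition and multiplication are exact rational operations (which yield floats). Division is implemented via an approximate inverse: for an integer $p$, $p^{-1}$ has numerator $\lfloor 2^{|p|}/p\rfloor$ and denominator $2^{|p|}$; dividing by a float $\langle p,q\rangle$ multiplies by numerator $\lfloor 2^{|p|}/p\rfloor\cdot q$ over denominator $2^{|p|}$. The size $|x|$ of a value is its length in bits. A function $f$ on bitstrings is size-preserving if there are constants $c,N$ with $|f(x)|\le c|x|$ whenever $|x|\ge N$; $\mathcal S$ is the set of such functions. Saturated attention: for $a\in\mathbb D^n$, $\mathcal M(a)=\{i:a_i=\max_j a_j\}$, $s(a)_j=1/|\mathcal M(a)|$ for $j\in\mathcal M(a)$, else $0$. Transformer over datatype $\mathbb D$ with alphabet $\Sigma$, dimension $k$, $L$ layers, $H$ heads: embedding $\phi:\Sigma\times\mathbb N\to\mathbb D^k$ in $\mathcal S$, scoring functions $s_{\ell,h}:\mathbb D^k\times\mathbb D^k\to\mathbb D$, activation functions $f_\ell\in\mathcal S$. On $w\in\Sigma^n$: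 $v_{0,i}=\phi(w_i,i)$; $a_{\ell,h,i,j}=s_{\ell,h}(v_{\ell,i},v_{\ell,j})$; $b_{\ell+1,h,i}=\sum_j\alpha(a_{\ell,h,i,\cdot})_j v_{\ell,j}$ (arithmetic in $\mathbb D$); $v_{\ell+1,i}=f_{\ell+1}(v_{\ell,i},b_{\ell+1,1,i},\dots,b_{\ell+1,H,i})$. It recognizes $L$ if for a rational affine map $W,b$: $W v_{L,1}(w)+b>0\iff w\in L$. $\mathrm T_\alpha(\mathbb D)$ is the class of languages so recognized with attention $\alpha$, datatype $\mathbb D$, some $k$, and embedding/activation functions in $\mathcal S$. $\mathsf{AC}^0$ is the class of languages $L\subseteq\{0,1\}^*$ recognized by a (non-uniform) family of circuits $\{C_n\}$, with unbounded fan-in AND/OR gates (inputs are the bits and their negations), polynomial size and constant depth, where $C_{|w|}(w)=1\iff w\in L$. *)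

theory Defs
  imports Complex_Main
begin

text \<open>A float is a sign bit together with a pair of unsigned binary integers p, q, where q
  is a power of 2.  We store q by its exponent: Flt s p e encodes the pair (p, 2^e).\<close>

datatype dfloat = Flt bool nat nat

fun bitlen :: "nat \<Rightarrow> nat" where
  "bitlen n = (if n < 2 then 1 else Suc (bitlen (n div 2)))"

text \<open>Size of a float in bits: sign bit + bits of p + bits of q = 2^e (which has e+1 bits).\<close>
fun fsize :: "dfloat \<Rightarrow> nat" where
  "fsize (Flt s p e) = 1 + bitlen p + Suc e"

definition vsize :: "dfloat list \<Rightarrow> nat" where
  "vsize v = sum_list (map fsize v)"

fun fval :: "dfloat \<Rightarrow> rat" where
  "fval (Flt s p e) = (if s then 1 else -1) * of_nat p / 2 ^ e"

text \<open>Normal form of the result of an exact operation (lowest terms; zero gets sign bit 1).\<close>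
fun fnorm :: "bool \<Rightarrow> nat \<Rightarrow> nat \<Rightarrow> dfloat" where
  "fnorm s p 0 = Flt (s \<or> p = 0) p 0"
| "fnorm s p (Suc e) = (if even p then fnorm s (p div 2) e else Flt (s \<or> p = 0) p (Suc e))"

definition fzero :: dfloat where "fzero = Flt True 0 0"

fun fadd :: "dfloat \<Rightarrow> dfloat \<Rightarrow> dfloat" where
  "fadd (Flt s1 p1 e1) (Flt s2 p2 e2) =
     (let e = max e1 e2;
          a = (if s1 then 1 else -1) * int p1 * 2 ^ (e - e1)
            + (if s2 then 1 else -1) * int p2 * 2 ^ (e - e2)
      in fnorm (a \<ge> 0) (nat \<bar>a\<bar>) e)"

fun fmul :: "dfloat \<Rightarrow> dfloat \<Rightarrow> dfloat" where
  "fmul (Flt s1 p1 e1) (Flt s2 p2 e2) = fnorm (s1 = s2) (p1 * p2) (e1 + e2)"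

definition fsum :: "dfloat list \<Rightarrow> dfloat" where
  "fsum xs = foldl fadd fzero xs"

definition finv :: "nat \<Rightarrow> dfloat" where
  "finv m = Flt True (2 ^ bitlen m div m) (bitlen m)"

definition sat_weights :: "dfloat list \<Rightarrow> dfloat list" where
  "sat_weights a =
     (let vals = map fval a; mx = Max (set vals);
          M = {j. j < length a \<and> vals ! j = mx}
      in map (\<lambda>j. if j \<in> M then finv (card M) else fzero) [0..<length a])"

definition attend :: "nat \<Rightarrow> dfloat list list \<Rightarrow> dfloat list \<Rightarrow> dfloat list" where
  "attend k vs ws =
     map (\<lambda>c. fsum (map (\<lambda>j. fmul (ws ! j) ((vs ! j) ! c)) [0..<length vs])) [0..<k]"

text \<open>One layer: sc h is the scoring function of head h (h = 1..H) of this layer,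
  g the activation function of the next layer.\<close>
definition tf_layer :: "nat \<Rightarrow> nat \<Rightarrow> (nat \<Rightarrow> dfloat list \<Rightarrow> dfloat list \<Rightarrow> dfloat)
     \<Rightarrow> (dfloat list \<Rightarrow> dfloat list list \<Rightarrow> dfloat list) \<Rightarrow> dfloat list list \<Rightarrow> dfloat list list" where
  "tf_layer k H sc g vs =
     map (\<lambda>i. g (vs ! i)
                 (map (\<lambda>h. attend k vs (sat_weights (map (\<lambda>j. sc h (vs ! i) (vs ! j)) [0..<length vs])))
                      [1..<Suc H]))
         [0..<length vs]"

text \<open>States v_l = list of the vectors v_{l,1},...,v_{l,n} (list index i-1 holds position i).
  phi: embedding; s l h: scoring function of layer l, head h; f l: activation of layer l.\<close>
fun tf_states :: "nat \<Rightarrow> nat \<Rightarrow> (bool \<Rightarrow> nat \<Rightarrow> dfloat list)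
     \<Rightarrow> (nat \<Rightarrow> nat \<Rightarrow> dfloat list \<Rightarrow> dfloat list \<Rightarrow> dfloat)
     \<Rightarrow> (nat \<Rightarrow> dfloat list \<Rightarrow> dfloat list list \<Rightarrow> dfloat list)
     \<Rightarrow> nat \<Rightarrow> bool list \<Rightarrow> dfloat list list" where
  "tf_states k H phi s f 0 w = map (\<lambda>i. phi (w ! i) (Suc i)) [0..<length w]"
| "tf_states k H phi s f (Suc l) w = tf_layer k H (s l) (f (Suc l)) (tf_states k H phi s f l w)"

text \<open>Size-preserving embedding (input (sigma, i) has size 1 + |i|, sigma a single bit).\<close>
definition size_pres_emb :: "(bool \<Rightarrow> nat \<Rightarrow> dfloat list) \<Rightarrow> bool" where
  "size_pres_emb phi \<longleftrightarrow> (\<exists>c N::nat. \<forall>\<sigma> i. N \<le> 1 + bitlen i \<longrightarrow> vsize (phi \<sigma> i) \<le> c * (1 + bitlen i))"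

definition size_pres_act :: "nat \<Rightarrow> nat \<Rightarrow> (dfloat list \<Rightarrow> dfloat list list \<Rightarrow> dfloat list) \<Rightarrow> bool" where
  "size_pres_act k H g \<longleftrightarrow> (\<exists>c N::nat. \<forall>v bs. length v = k \<longrightarrow> length bs = H \<longrightarrow> (\<forall>b\<in>set bs. length b = k) \<longrightarrow>
       N \<le> vsize v + sum_list (map vsize bs) \<longrightarrow>
       vsize (g v bs) \<le> c * (vsize v + sum_list (map vsize bs)))"

text \<open>T_s(F) over the alphabet {0,1} (False = 0, True = 1); languages are subsets of {0,1}^+.\<close>
definition T_sat_float :: "bool list set set" where
  "T_sat_float = {L. [] \<notin> L \<and>
     (\<exists>(k::nat) (nL::nat) (H::nat) phi s f (W::rat list) (b::rat).
        length W = k \<and>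
        size_pres_emb phi \<and> (\<forall>\<sigma> i. length (phi \<sigma> i) = k) \<and>
        (\<forall>l\<in>{1..nL}. size_pres_act k H (f l) \<and>
            (\<forall>v bs. length v = k \<longrightarrow> length bs = H \<longrightarrow> (\<forall>x\<in>set bs. length x = k) \<longrightarrow>
                   length (f l v bs) = k)) \<and>
        (\<forall>w. w \<noteq> [] \<longrightarrow>
           ((\<Sum>c<k. W ! c * fval (hd (tf_states k H phi s f nL w) ! c)) + b > 0 \<longleftrightarrow> w \<in> L)))}"

text \<open>A circuit is a nonempty list of gates; a gate refers to earlier gates by index;
  the output is the last gate.  Lit i True = x_i, Lit i False = not x_i (0-indexed bits).\<close>
datatype gate = Lit nat bool | AndG "nat list" | OrG "nat list"

fun gate_val :: "bool list \<Rightarrow> bool list \<Rightarrow> gate \<Rightarrow> bool" where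
  "gate_val w vs (Lit i b) = (w ! i = b)"
| "gate_val w vs (AndG js) = (\<forall>j\<in>set js. vs ! j)"
| "gate_val w vs (OrG js) = (\<exists>j\<in>set js. vs ! j)"

definition circ_out :: "gate list \<Rightarrow> bool list \<Rightarrow> bool" where
  "circ_out C w = last (foldl (\<lambda>vs g. vs @ [gate_val w vs g]) [] C)"

fun gate_depth :: "nat list \<Rightarrow> gate \<Rightarrow> nat" where
  "gate_depth ds (Lit i b) = 0"
| "gate_depth ds (AndG js) = Suc (foldr max (map (nth ds) js) 0)"
| "gate_depth ds (OrG js) = Suc (foldr max (map (nth ds) js) 0)"

definition circ_depth :: "gate list \<Rightarrow> nat" where
  "circ_depth C = foldr max (foldl (\<lambda>ds g. ds @ [gate_depth ds g]) [] C) 0"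

fun gate_size :: "gate \<Rightarrow> nat" where
  "gate_size (Lit i b) = 1"
| "gate_size (AndG js) = 1 + length js"
| "gate_size (OrG js) = 1 + length js"

definition circ_size :: "gate list \<Rightarrow> nat" where
  "circ_size C = sum_list (map gate_size C)"

definition circ_wf :: "nat \<Rightarrow> gate list \<Rightarrow> bool" where
  "circ_wf n C \<longleftrightarrow> C \<noteq> [] \<and> (\<forall>g<length C. case C ! g of
       Lit i b \<Rightarrow> i < n
     | AndG js \<Rightarrow> (\<forall>j\<in>set js. j < g)
     | OrG js \<Rightarrow> (\<forall>j\<in>set js. j < g))"

definition AC0 :: "bool list set set" where
  "AC0 = {L. \<exists>(C::nat \<Rightarrow> gate list) (d::nat) (e::nat).
            (\<forall>n. circ_wf n (C n) \<and> circ_size (C n) \<le> n ^ e + e \<and> circ_depth (C n) \<le> d) \<and>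
            (\<forall>w. circ_out (C (length w)) w \<longleftrightarrow> w \<in> L)}"

definition MAJ :: "bool list set" where
  "MAJ = {w. w \<noteq> [] \<and> count_list w True > count_list w False}"

end

theory Submission
  imports Defs "HOL-Library.Numeral_Type" "HOL-Library.FuncSet"
begin


lemma fval_fnorm: "fval (fnorm s p e) = (if s then 1 else -1) * of_nat p / 2^e"
proof (induction e arbitrary: p)
  case 0 then show ?case by auto
next
  case (Suc e)
  show ?case
  proof (cases "even p")
    case True
    then obtain q where p: "p = 2*q" by blast
    show ?thesis using True Suc[of q] by (simp add: p)
  next
    case False then show ?thesis by auto
  qed
qed

lemma fval_fadd: "fval (fadd x y) = fval x + fval y"
proof (cases x; cases y)
  fix s1 p1 e1 s2 p2 e2 assume x: "x = Flt s1 p1 e1" and y: "y = Flt s2 p2 e2"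
  define e where "e = max e1 e2"
  define a where "a = (if s1 then 1 else -1) * int p1 * 2 ^ (e - e1)
            + (if s2 then 1 else -1) * int p2 * 2 ^ (e - e2)"
  have fa: "fadd x y = fnorm (a \<ge> 0) (nat \<bar>a\<bar>) e" by (simp add: x y e_def a_def Let_def)
  have "fval (fadd x y) = of_int a / 2^e"
    unfolding fa fval_fnorm by (cases "a \<ge> 0") auto
  also have "\<dots> = fval x + fval y"
  proof -
    have pd: "(2::rat)^(e-e') / 2^e = 1 / 2^e'" if "e' \<le> e" for e'
      using that by (simp add: power_diff)
    have pc: "c * (2::rat)^(e-e') / 2^e = c / 2^e'" if "e' \<le> e" for e' c
    proof -
      have "c * (2::rat)^(e-e') / 2^e = c * ((2::rat)^(e-e') / 2^e)" by simp
      also have "\<dots> = c / 2^e'" using pd[OF that] by simp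
      finally show ?thesis .
    qed
    have t1: "(if s1 then 1 else -1) * of_nat p1 * 2 ^ (e - e1) / (2::rat)^e = fval x"
      using pc[of e1] by (simp add: x e_def)
    have t2: "(if s2 then 1 else -1) * of_nat p2 * 2 ^ (e - e2) / (2::rat)^e = fval y"
      using pc[of e2] by (simp add: y e_def)
    have "of_int a / (2::rat)^e = (if s1 then 1 else -1) * of_nat p1 * 2 ^ (e - e1) / 2^e
          + (if s2 then 1 else -1) * of_nat p2 * 2 ^ (e - e2) / 2^e"
      by (simp add: a_def add_divide_distrib)
    also have "\<dots> = fval x + fval y" using t1 t2 by simp
    finally show ?thesis .
  qed
  finally show ?thesis .
qed

lemma fval_fmul: "fval (fmul x y) = fval x * fval y"
  by (cases x; cases y) (auto simp: fval_fnorm power_add)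

lemma fval_foldl: "fval (foldl fadd a xs) = fval a + sum_list (map fval xs)"
  by (induction xs arbitrary: a) (auto simp: fval_fadd)

lemma fval_fsum: "fval (fsum xs) = sum_list (map fval xs)"
  unfolding fsum_def by (simp add: fval_foldl fzero_def)

lemma bitlen_gt: "n < 2 ^ bitlen n"
proof (induction n rule: bitlen.induct)
  case (1 n)
  show ?case
  proof (cases "n < 2")
    case True then show ?thesis by simp
  next
    case False
    then have "n div 2 < 2 ^ bitlen (n div 2)" using 1 by simp
    then show ?thesis using False by simp
  qed
qed

lemma finv_pos: "n > 0 \<Longrightarrow> fval (finv n) > 0"
  unfolding finv_def using bitlen_gt[of n]
  by (simp add: div_greater_zero_iff)

lemma count_sum: "(\<Sum>x\<leftarrow>w. if x then (1::rat) else -1) = of_nat (count_list w True) - of_nat (count_list w False)"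
  by (induction w) auto

definition phiM :: "bool \<Rightarrow> nat \<Rightarrow> dfloat list" where "phiM \<sigma> i = [Flt \<sigma> 1 0]"
definition sM :: "nat \<Rightarrow> nat \<Rightarrow> dfloat list \<Rightarrow> dfloat list \<Rightarrow> dfloat" where "sM l h u v = fzero"
definition fM :: "nat \<Rightarrow> dfloat list \<Rightarrow> dfloat list list \<Rightarrow> dfloat list" where "fM l v bs = hd bs"

lemma sat_const: "sat_weights (map (\<lambda>j. fzero) [0..<n]) = map (\<lambda>j. finv n) [0..<n]"
proof -
  have M: "{j. j < n \<and> map fval (map (\<lambda>j. fzero) [0..<n]) ! j = Max (set (map fval (map (\<lambda>j. fzero) [0..<n])))} = {..<n}"
    by (auto simp: fzero_def)
  have M2: "{j. j < n \<and> map (fval \<circ> (\<lambda>j. fzero)) [0..<n] ! j = fval fzero} = {..<n}" by auto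
  show ?thesis unfolding sat_weights_def Let_def by (simp add: M2)
qed

lemma MAJ_in_T: "MAJ \<in> T_sat_float"
proof -
  have out: "fval (hd (tf_states 1 1 phiM sM fM 1 w) ! 0) =
     fval (finv (length w)) * (of_nat (count_list w True) - of_nat (count_list w False))"
    if "w \<noteq> []" for w
  proof -
    let ?n = "length w"
    let ?vs = "map (\<lambda>i. [Flt (w ! i) 1 0]) [0..<?n]"
    have st0: "tf_states 1 1 phiM sM fM 0 w = ?vs" by (simp add: phiM_def)
    have sc: "map (\<lambda>j. sM 0 1 (?vs ! i) (?vs ! j)) [0..<length ?vs] = map (\<lambda>j. fzero) [0..<?n]" for i
      by (simp add: sM_def)
    have t1: "tf_states 1 1 phiM sM fM 1 w = tf_layer 1 1 (sM 0) (fM 1) ?vs"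
    proof -
      have "tf_states 1 1 phiM sM fM 1 w = tf_layer 1 1 (sM 0) (fM 1) (tf_states 1 1 phiM sM fM 0 w)" by simp
      then show ?thesis by (simp only: st0)
    qed
    have ne: "[0..<length ?vs] \<noteq> []" using that by simp
    have "hd (tf_states 1 1 phiM sM fM 1 w) = attend 1 ?vs (map (\<lambda>j. finv ?n) [0..<?n])"
      unfolding t1 tf_layer_def hd_map[OF ne] using that
      by (simp add: sM_def sat_const fM_def)
    then have "hd (tf_states 1 1 phiM sM fM 1 w) ! 0 = attend 1 ?vs (map (\<lambda>j. finv ?n) [0..<?n]) ! 0"
      by (rule arg_cong)
    also have "\<dots> = fsum (map (\<lambda>j. fmul (finv ?n) (Flt (w!j) 1 0)) [0..<?n])"
      unfolding attend_def by (auto intro!: arg_cong[where f=fsum] map_cong)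
    finally have "hd (tf_states 1 1 phiM sM fM 1 w) ! 0 = fsum (map (\<lambda>j. fmul (finv ?n) (Flt (w!j) 1 0)) [0..<?n])" .
    then have "fval (hd (tf_states 1 1 phiM sM fM 1 w) ! 0) = (\<Sum>j\<leftarrow>[0..<?n]. fval (finv ?n) * (if w!j then 1 else -1))"
      by (simp add: fval_fsum fval_fmul comp_def)
    also have "\<dots> = fval (finv ?n) * (\<Sum>j\<leftarrow>[0..<?n]. (if w!j then 1 else -1))"
      by (simp add: sum_list_const_mult)
    also have "(\<Sum>j\<leftarrow>[0..<?n]. (if w!j then (1::rat) else -1)) = (\<Sum>x\<leftarrow>w. if x then (1::rat) else -1)"
    proof -
      have ww: "w = map ((!) w) [0..<?n]" by (simp add: map_nth)
      show ?thesis by (subst (2) ww) (simp only: map_map comp_def)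
    qed
    finally show ?thesis by (simp add: count_sum)
  qed
  have A: "[] \<notin> MAJ" by (simp add: MAJ_def)
    have B: "size_pres_emb phiM" unfolding size_pres_emb_def
      by (rule exI[of _ 3], rule exI[of _ 0]) (simp add: phiM_def vsize_def)
    have C: "\<forall>\<sigma> i. length (phiM \<sigma> i) = 1" by (simp add: phiM_def)
    have D: "\<forall>l\<in>{1..1}. size_pres_act 1 1 (fM l) \<and>
        (\<forall>v bs. length v = 1 \<longrightarrow> length bs = 1 \<longrightarrow> (\<forall>x\<in>set bs. length x = 1) \<longrightarrow> length (fM l v bs) = 1)"
    proof (intro ballI conjI allI impI)
      fix l show "size_pres_act 1 1 (fM l)" unfolding size_pres_act_def
      proof (rule exI[of _ 1], rule exI[of _ 0], intro allI impI)
        fix v bs :: "dfloat list list" and v' :: "dfloat list"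
        show "length v' = 1 \<Longrightarrow> length bs = 1 \<Longrightarrow> (\<forall>b\<in>set bs. length b = 1) \<Longrightarrow> 0 \<le> vsize v' + sum_list (map vsize bs) \<Longrightarrow>
           vsize (fM l v' bs) \<le> 1 * (vsize v' + sum_list (map vsize bs))"
          by (cases bs) (auto simp: fM_def)
      qed
    next
      fix l v bs assume "length (v::dfloat list) = 1" "length bs = 1" "\<forall>x\<in>set bs. length (x::dfloat list) = 1"
      then show "length (fM l v bs) = 1" by (cases bs) (auto simp: fM_def)
    qed
    have E: "\<forall>w. w \<noteq> [] \<longrightarrow> ((\<Sum>c<1. [1::rat] ! c * fval (hd (tf_states 1 1 phiM sM fM 1 w) ! c)) + 0 > 0 \<longleftrightarrow> w \<in> MAJ)"
    proof (intro allI impI)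
      fix w :: "bool list" assume w: "w \<noteq> []"
      have p: "fval (finv (length w)) > 0" using w finv_pos by simp
      show "((\<Sum>c<1. [1::rat] ! c * fval (hd (tf_states 1 1 phiM sM fM 1 w) ! c)) + 0 > 0 \<longleftrightarrow> w \<in> MAJ)"
        using out[OF w] p w by (simp add: MAJ_def zero_less_mult_iff)
    qed
  show ?thesis
    unfolding T_sat_float_def
    apply (rule CollectI, rule conjI[OF A])
    apply (rule exI[of _ 1], rule exI[of _ 1], rule exI[of _ 1], rule exI[of _ phiM], rule exI[of _ sM], rule exI[of _ fM], rule exI[of _ "[1]"], rule exI[of _ 0])
    using B C D E by simp
qed



definition accum :: "('b list \<Rightarrow> 'a \<Rightarrow> 'b) \<Rightarrow> 'a list \<Rightarrow> 'b list" where
  "accum F C = foldl (\<lambda>vs g. vs @ [F vs g]) [] C"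

lemma accum_snoc: "accum F (C @ [g]) = accum F C @ [F (accum F C) g]"
  by (simp add: accum_def)

lemma accum_length[simp]: "length (accum F C) = length C"
  by (induction C rule: rev_induct) (auto simp: accum_snoc, simp add: accum_def)

lemma accum_take: "accum F (take k C) = take k (accum F C)"
proof (induction C rule: rev_induct)
  case Nil then show ?case by (simp add: accum_def)
next
  case (snoc g C)
  show ?case
  proof (cases "k \<le> length C")
    case True
    then show ?thesis using snoc by (simp add: accum_snoc)
  next
    case False
    then show ?thesis by simp
  qed
qed

lemma accum_nth: "g < length C \<Longrightarrow> accum F C ! g = F (take g (accum F C)) (C ! g)"
proof -
  assume g: "g < length C"
  have "take (Suc g) C = take g C @ [C ! g]" using g by (simp add: take_Suc_conv_app_nth)
  then have "accum F (take (Suc g) C) = accum F (take g C) @ [F (accum F (take g C)) (C ! g)]"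
    by (simp add: accum_snoc)
  then have "take (Suc g) (accum F C) = take g (accum F C) @ [F (take g (accum F C)) (C ! g)]"
    by (simp add: accum_take)
  moreover have "take (Suc g) (accum F C) ! g = accum F C ! g" by simp
  ultimately show ?thesis using g by (simp add: nth_append min_def)
qed

lemma circ_out_accum: "circ_out C w = last (accum (gate_val w) C)"
  by (simp add: circ_out_def accum_def)

lemma circ_depth_accum: "circ_depth C = foldr max (accum gate_depth C) 0"
  by (simp add: circ_depth_def accum_def)

lemma foldr_max_ge: "x \<in> set xs \<Longrightarrow> x \<le> foldr max xs (0::nat)"
  by (induction xs) auto

lemma foldr_max_le: "(\<forall>x\<in>set xs. x \<le> y) \<Longrightarrow> foldr max xs (0::nat) \<le> y"
  by (induction xs) auto

lemma length_le_size: "length C \<le> circ_size C"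
proof -
  have "length C = sum_list (map (\<lambda>g. 1) C)" by (simp add: sum_list_triv)
  also have "\<dots> \<le> circ_size C" unfolding circ_size_def
  proof (rule sum_list_mono)
    fix x show "1 \<le> gate_size x" by (cases x) auto
  qed
  finally show ?thesis .
qed



type_synonym f3 = "3"

lemma F3_cases: "(x::3) = 0 \<or> x = 1 \<or> x = 2"
proof (cases x)
  case (of_int z)
  then have "z = 0 \<or> z = 1 \<or> z = 2" by (simp, arith)
  then show ?thesis using of_int by auto
qed

lemma F3_sq: "(x::3) \<noteq> 0 \<Longrightarrow> x * x = 1"
  using F3_cases[of x] by auto

definition yv :: "bool \<Rightarrow> 3" where "yv b = (if b then -1 else 1)"

lemma yv_sq[simp]: "yv b * yv b = 1" by (simp add: yv_def)

definition ymon :: "nat set \<Rightarrow> bool list \<Rightarrow> 3" where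
  "ymon S w = (\<Prod>i\<in>S. yv (w ! i))"

definition LS :: "nat \<Rightarrow> nat \<Rightarrow> nat set set" where
  "LS N d = {S. S \<subseteq> {..<N} \<and> card S \<le> d}"

lemma finite_LS[simp]: "finite (LS N d)"
proof -
  have "LS N d \<subseteq> Pow {..<N}" by (auto simp: LS_def)
  then show ?thesis by (rule finite_subset) simp
qed

definition deg_le :: "nat \<Rightarrow> nat \<Rightarrow> (bool list \<Rightarrow> 3) \<Rightarrow> bool" where
  "deg_le N d f \<longleftrightarrow> (\<exists>c. \<forall>w. length w = N \<longrightarrow> f w = (\<Sum>S\<in>LS N d. c S * ymon S w))"

lemma deg_le_cong: "deg_le N d f \<Longrightarrow> (\<And>w. length w = N \<Longrightarrow> f w = g w) \<Longrightarrow> deg_le N d g"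
  unfolding deg_le_def by metis

lemma deg_le_zero: "deg_le N d (\<lambda>w. 0)"
  unfolding deg_le_def by (rule exI[of _ "\<lambda>S. 0"]) simp

lemma deg_le_add: "deg_le N d f \<Longrightarrow> deg_le N d g \<Longrightarrow> deg_le N d (\<lambda>w. f w + g w)"
  unfolding deg_le_def
proof (elim exE)
  fix c c' assume c: "\<forall>w. length w = N \<longrightarrow> f w = (\<Sum>S\<in>LS N d. c S * ymon S w)"
    and c': "\<forall>w. length w = N \<longrightarrow> g w = (\<Sum>S\<in>LS N d. c' S * ymon S w)"
  show "\<exists>c. \<forall>w. length w = N \<longrightarrow> f w + g w = (\<Sum>S\<in>LS N d. c S * ymon S w)"
    by (rule exI[of _ "\<lambda>S. c S + c' S"]) (simp add: c c' distrib_right sum.distrib)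
qed

lemma deg_le_smult: "deg_le N d f \<Longrightarrow> deg_le N d (\<lambda>w. k * f w)"
  unfolding deg_le_def
proof (elim exE)
  fix c assume c: "\<forall>w. length w = N \<longrightarrow> f w = (\<Sum>S\<in>LS N d. c S * ymon S w)"
  show "\<exists>c. \<forall>w. length w = N \<longrightarrow> k * f w = (\<Sum>S\<in>LS N d. c S * ymon S w)"
    by (rule exI[of _ "\<lambda>S. k * c S"]) (simp add: c sum_distrib_left mult.assoc)
qed

lemma deg_le_neg: "deg_le N d f \<Longrightarrow> deg_le N d (\<lambda>w. - f w)"
  using deg_le_smult[of N d f "-1"] by simp

lemma deg_le_diff: "deg_le N d f \<Longrightarrow> deg_le N d g \<Longrightarrow> deg_le N d (\<lambda>w. f w - g w)"
  using deg_le_add[of N d f "\<lambda>w. - g w"] deg_le_neg[of N d g] by simp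

lemma deg_le_sum: "finite I \<Longrightarrow> (\<And>i. i \<in> I \<Longrightarrow> deg_le N d (F i)) \<Longrightarrow> deg_le N d (\<lambda>w. \<Sum>i\<in>I. F i w)"
proof (induction I rule: finite_induct)
  case empty then show ?case by (simp add: deg_le_zero)
next
  case (insert x F)
  then show ?case by (simp add: deg_le_add)
qed

lemma deg_le_monomial: "S \<subseteq> {..<N} \<Longrightarrow> card S \<le> d \<Longrightarrow> deg_le N d (ymon S)"
  unfolding deg_le_def
proof (rule exI[of _ "\<lambda>T. if T = S then 1 else 0"], intro allI impI)
  fix w assume "S \<subseteq> {..<N}" "card S \<le> d"
  then have "S \<in> LS N d" by (simp add: LS_def)
  then have "(\<Sum>T\<in>LS N d. (if T = S then 1 else 0) * ymon T w) = (\<Sum>T\<in>LS N d. if T = S then ymon T w else 0)"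
    by (intro sum.cong) auto
  also have "\<dots> = ymon S w" using \<open>S \<in> LS N d\<close> by (simp add: sum.delta)
  finally show "ymon S w = (\<Sum>T\<in>LS N d. (if T = S then 1 else 0) * ymon T w)" by simp
qed

lemma deg_le_const: "deg_le N d (\<lambda>w. k)"
proof -
  have "deg_le N d (ymon {})" by (rule deg_le_monomial) auto
  then have "deg_le N d (\<lambda>w. k * ymon {} w)" by (rule deg_le_smult)
  then show ?thesis by (simp add: ymon_def)
qed

lemma LS_mono: "d \<le> d' \<Longrightarrow> LS N d \<subseteq> LS N d'"
  by (auto simp: LS_def)

lemma deg_le_mono: "deg_le N d f \<Longrightarrow> d \<le> d' \<Longrightarrow> deg_le N d' f"
proof -
  assume f: "deg_le N d f" and dd: "d \<le> d'"
  then obtain c where c: "\<forall>w. length w = N \<longrightarrow> f w = (\<Sum>S\<in>LS N d. c S * ymon S w)"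
    unfolding deg_le_def by blast
  have "deg_le N d' (\<lambda>w. \<Sum>S\<in>LS N d. c S * ymon S w)"
    apply (rule deg_le_sum, simp)
    apply (rule deg_le_smult, rule deg_le_monomial)
    using dd by (auto simp: LS_def)
  then show ?thesis by (rule deg_le_cong) (simp add: c)
qed

lemma mono_mult:
  assumes "finite S" "finite T"
  shows "ymon S w * ymon T w = ymon ((S - T) \<union> (T - S)) w"
proof -
  have s: "ymon S w = ymon (S - T) w * ymon (S \<inter> T) w"
    unfolding ymon_def using assms prod.union_disjoint[of "S - T" "S \<inter> T" "\<lambda>i. yv (w!i)"]
    by (simp add: Un_Diff_Int Diff_Int_distrib2 inf_assoc)
  have t: "ymon T w = ymon (T - S) w * ymon (S \<inter> T) w"
  proof -
    have "T = (T - S) \<union> (S \<inter> T)" by blast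
    then have "ymon T w = ymon ((T - S) \<union> (S \<inter> T)) w" by simp
    also have "\<dots> = ymon (T - S) w * ymon (S \<inter> T) w"
      unfolding ymon_def using assms by (intro prod.union_disjoint) auto
    finally show ?thesis .
  qed
  have sq: "ymon (S \<inter> T) w * ymon (S \<inter> T) w = 1"
    unfolding ymon_def prod.distrib[symmetric] by simp
  have u: "ymon ((S - T) \<union> (T - S)) w = ymon (S - T) w * ymon (T - S) w"
    unfolding ymon_def using assms by (subst prod.union_disjoint) auto
  show ?thesis unfolding s t u
    using sq by (simp add: algebra_simps)
qed

lemma card_symdiff_le: "finite S \<Longrightarrow> finite T \<Longrightarrow> card ((S - T) \<union> (T - S)) \<le> card S + card T"
  by (meson card_Un_le card_mono diff_le_self finite_Diff add_mono order_trans Diff_subset)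

lemma deg_le_mult: "deg_le N a f \<Longrightarrow> deg_le N b g \<Longrightarrow> deg_le N (a + b) (\<lambda>w. f w * g w)"
proof -
  assume "deg_le N a f" "deg_le N b g"
  then obtain c c' where c: "\<forall>w. length w = N \<longrightarrow> f w = (\<Sum>S\<in>LS N a. c S * ymon S w)"
    and c': "\<forall>w. length w = N \<longrightarrow> g w = (\<Sum>S\<in>LS N b. c' S * ymon S w)"
    unfolding deg_le_def by blast
  have "deg_le N (a + b) (\<lambda>w. \<Sum>S\<in>LS N a. \<Sum>T\<in>LS N b. (c S * c' T) * ymon ((S - T) \<union> (T - S)) w)"
  proof (intro deg_le_sum deg_le_smult deg_le_monomial, simp, simp)
    fix S T assume S: "S \<in> LS N a" and T: "T \<in> LS N b"
    then show "(S - T) \<union> (T - S) \<subseteq> {..<N}" by (auto simp: LS_def)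
    have fin: "finite S" "finite T" using S T by (auto simp: LS_def intro: finite_subset)
    show "card ((S - T) \<union> (T - S)) \<le> a + b"
      using card_symdiff_le[OF fin] S T by (auto simp: LS_def)
  qed
  then show ?thesis
  proof (rule deg_le_cong)
    fix w :: "bool list" assume w: "length w = N"
    have "f w * g w = (\<Sum>S\<in>LS N a. \<Sum>T\<in>LS N b. (c S * ymon S w) * (c' T * ymon T w))"
      by (simp add: c c' w sum_product)
    also have "\<dots> = (\<Sum>S\<in>LS N a. \<Sum>T\<in>LS N b. (c S * c' T) * ymon ((S - T) \<union> (T - S)) w)"
    proof (intro sum.cong refl)
      fix S T assume S: "S \<in> LS N a" and T: "T \<in> LS N b"
      have fin: "finite S" "finite T" using S T by (auto simp: LS_def intro: finite_subset)
      show "(c S * ymon S w) * (c' T * ymon T w) = (c S * c' T) * ymon ((S - T) \<union> (T - S)) w"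
        using mono_mult[OF fin, of w] by (simp add: algebra_simps)
    qed
    finally show "(\<Sum>S\<in>LS N a. \<Sum>T\<in>LS N b. (c S * c' T) * ymon ((S - T) \<union> (T - S)) w) = f w * g w" by simp
  qed
qed

lemma deg_le_prod: "(\<And>i. i < k \<Longrightarrow> deg_le N a (F i)) \<Longrightarrow> deg_le N (k * a) (\<lambda>w. \<Prod>i<k. F i w)"
proof (induction k)
  case 0 then show ?case by (simp add: deg_le_const)
next
  case (Suc k)
  have "deg_le N (a + k * a) (\<lambda>w. F k w * (\<Prod>i<k. F i w))"
    using Suc by (intro deg_le_mult) auto
  then show ?case by (simp add: mult.commute)
qed

definition xv :: "nat \<Rightarrow> bool list \<Rightarrow> 3" where "xv i w = (if w ! i then 1 else 0)"

lemma xv_eq: "xv i w = ymon {i} w - 1"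
  by (simp add: xv_def ymon_def yv_def)

lemma deg_le_xv: "i < N \<Longrightarrow> 1 \<le> d \<Longrightarrow> deg_le N d (xv i)"
proof -
  assume "i < N" "1 \<le> d"
  then have "deg_le N d (ymon {i})" by (intro deg_le_monomial) auto
  then have "deg_le N d (\<lambda>w. ymon {i} w - 1)" by (intro deg_le_diff deg_le_const)
  then show ?thesis by (simp add: xv_eq[abs_def])
qed



lemma card_filter_sum: "finite X \<Longrightarrow> card {x\<in>X. P x} = (\<Sum>x\<in>X. if P x then 1 else 0)"
  using sum.inter_filter[of X "\<lambda>_. 1::nat" P] by simp

lemma half_zero:
  fixes v :: "nat \<Rightarrow> 3"
  assumes J: "finite J" and k: "k \<in> J" and vk: "v k \<noteq> 0"
  shows "2 * card {T \<in> Pow J. sum v T = 0} \<le> 2 ^ card J"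
proof -
  define Z where "Z = {T \<in> Pow J. sum v T = 0}"
  define \<phi> where "\<phi> T = (if k \<in> T then T - {k} else insert k T)" for T
  have inv: "\<phi> (\<phi> T) = T" for T unfolding \<phi>_def by auto
  have inj: "inj_on \<phi> Z" by (metis inv inj_onI)
  have sub1: "Z \<subseteq> Pow J" by (auto simp: Z_def)
  have sub2: "\<phi> ` Z \<subseteq> Pow J" using k by (auto simp: Z_def \<phi>_def)
  have disj: "Z \<inter> \<phi> ` Z = {}"
  proof (rule ccontr)
    assume "Z \<inter> \<phi> ` Z \<noteq> {}"
    then obtain T where T: "T \<in> Z" "\<phi> T \<in> Z" by auto
    have fT: "finite T" using T J by (auto simp: Z_def intro: finite_subset)
    show False
    proof (cases "k \<in> T")
      case True
      then have "sum v T = v k + sum v (T - {k})" using fT by (simp add: sum.remove)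
      moreover have "sum v (T - {k}) = 0" using T True by (simp add: Z_def \<phi>_def)
      moreover have "sum v T = 0" using T by (simp add: Z_def)
      ultimately show False using vk by simp
    next
      case False
      then have "sum v (insert k T) = v k + sum v T" using fT by simp
      moreover have "sum v (insert k T) = 0" using T False by (simp add: Z_def \<phi>_def)
      moreover have "sum v T = 0" using T by (simp add: Z_def)
      ultimately show False using vk by simp
    qed
  qed
  have fZ: "finite Z" using sub1 J by (auto intro: finite_subset)
  have "2 * card Z = card Z + card (\<phi> ` Z)" using card_image[OF inj] by simp
  also have "\<dots> = card (Z \<union> \<phi> ` Z)" using disj fZ by (simp add: card_Un_disjoint)
  also have "\<dots> \<le> card (Pow J)" using sub1 sub2 J by (intro card_mono) auto
  also have "\<dots> = 2 ^ card J" using J by (simp add: card_Pow)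
  finally show ?thesis by (simp add: Z_def)
qed

definition orq :: "nat \<Rightarrow> (nat \<Rightarrow> nat set) \<Rightarrow> (nat \<Rightarrow> bool list \<Rightarrow> 3) \<Rightarrow> bool list \<Rightarrow> 3" where
  "orq l tup p x = 1 - (\<Prod>i<l. 1 - (\<Sum>j\<in>tup i. p j x) * (\<Sum>j\<in>tup i. p j x))"

lemma orq_deg:
  assumes J: "finite J" and tup: "\<And>i. i < l \<Longrightarrow> tup i \<subseteq> J" and deg: "\<And>j. j \<in> J \<Longrightarrow> deg_le N a (p j)"
  shows "deg_le N (l * (2*a)) (orq l tup p)"
proof -
  have "deg_le N (l * (2*a)) (\<lambda>x. \<Prod>i<l. 1 - (\<Sum>j\<in>tup i. p j x) * (\<Sum>j\<in>tup i. p j x))"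
  proof (rule deg_le_prod)
    fix i assume i: "i < l"
    have fin: "finite (tup i)" using tup[OF i] J by (rule finite_subset)
    have s: "deg_le N a (\<lambda>x. \<Sum>j\<in>tup i. p j x)"
      using fin tup[OF i] deg by (intro deg_le_sum) auto
    have "deg_le N (a + a) (\<lambda>x. (\<Sum>j\<in>tup i. p j x) * (\<Sum>j\<in>tup i. p j x))"
      by (rule deg_le_mult[OF s s])
    then show "deg_le N (2 * a) (\<lambda>x. 1 - (\<Sum>j\<in>tup i. p j x) * (\<Sum>j\<in>tup i. p j x))"
      by (intro deg_le_diff deg_le_const) (simp add: mult_2)
  qed
  then show ?thesis unfolding orq_def[abs_def] by (intro deg_le_diff deg_le_const)
qed

lemma orq_bad:
  assumes "\<forall>j\<in>J. p j x = 0 \<or> p j x = 1"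
    and "orq l tup p x \<noteq> (if \<exists>j\<in>J. p j x = 1 then 1 else 0)"
    and "\<And>i. i < l \<Longrightarrow> tup i \<subseteq> J"
  shows "(\<exists>j\<in>J. p j x = 1) \<and> (\<forall>i<l. (\<Sum>j\<in>tup i. p j x) = 0)"
proof (cases "\<exists>j\<in>J. p j x = 1")
  case False
  then have z: "\<forall>j\<in>J. p j x = 0" using assms(1) by auto
  have "(\<Sum>j\<in>tup i. p j x) = 0" if "i < l" for i
    using assms(3)[OF that] z by (intro sum.neutral) auto
  then have "orq l tup p x = 0" unfolding orq_def by simp
  then show ?thesis using assms(2) False by simp
next
  case True
  have "(\<Sum>j\<in>tup i. p j x) = 0" if i: "i < l" for i
  proof (rule ccontr)
    assume "(\<Sum>j\<in>tup i. p j x) \<noteq> 0"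
    then have "1 - (\<Sum>j\<in>tup i. p j x) * (\<Sum>j\<in>tup i. p j x) = 0" by (simp add: F3_sq)
    then have "(\<Prod>i<l. 1 - (\<Sum>j\<in>tup i. p j x) * (\<Sum>j\<in>tup i. p j x)) = 0"
      using i by (intro prod_zero) auto
    then have "orq l tup p x = 1" unfolding orq_def by simp
    then show False using assms(2) True by simp
  qed
  then show ?thesis using True by simp
qed

lemma or_approx:
  fixes X :: "bool list set" and J :: "nat set" and p :: "nat \<Rightarrow> bool list \<Rightarrow> 3"
  assumes X: "finite X" and J: "finite J" and deg: "\<And>j. j \<in> J \<Longrightarrow> deg_le N a (p j)"
  shows "\<exists>q. deg_le N (l * (2*a)) q \<and>
     card {x\<in>X. (\<forall>j\<in>J. p j x = 0 \<or> p j x = 1) \<and> q x \<noteq> (if \<exists>j\<in>J. p j x = 1 then 1 else 0)} * 2^l \<le> card X"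
proof -
  define TT where "TT = PiE {..<l} (\<lambda>_. Pow J)"
  define bad where "bad tup x \<longleftrightarrow> (\<forall>j\<in>J. p j x = 0 \<or> p j x = 1) \<and> orq l tup p x \<noteq> (if \<exists>j\<in>J. p j x = 1 then 1 else 0)" for tup x
  have fTT: "finite TT" unfolding TT_def using J by (intro finite_PiE) auto
  have cTT: "card TT = (2 ^ card J) ^ l" unfolding TT_def using J by (simp add: card_PiE card_Pow)
  have tupJ: "tup \<in> TT \<Longrightarrow> i < l \<Longrightarrow> tup i \<subseteq> J" for tup i unfolding TT_def by auto
  have each: "2^l * card {tup\<in>TT. bad tup x} \<le> card TT" if x: "x \<in> X" for x
  proof (cases "\<exists>j\<in>J. p j x = 1")
    case False
    then have "{tup\<in>TT. bad tup x} = {}" using orq_bad tupJ unfolding bad_def by blast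
    then show ?thesis by (subst \<open>{tup\<in>TT. bad tup x} = {}\<close>) simp
  next
    case True
    then obtain k where k: "k \<in> J" "p k x = 1" by blast
    define Z where "Z = {T \<in> Pow J. sum (\<lambda>j. p j x) T = 0}"
    have hz: "2 * card Z \<le> 2 ^ card J" unfolding Z_def using half_zero[OF J k(1), of "\<lambda>j. p j x"] k by simp
    have sub: "{tup\<in>TT. bad tup x} \<subseteq> PiE {..<l} (\<lambda>_. Z)"
    proof
      fix tup assume t: "tup \<in> {tup\<in>TT. bad tup x}"
      then have "\<forall>i<l. (\<Sum>j\<in>tup i. p j x) = 0" using orq_bad[of J p x l tup] tupJ unfolding bad_def by blast
      then show "tup \<in> PiE {..<l} (\<lambda>_. Z)" using t unfolding TT_def Z_def by (auto simp: PiE_iff)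
    qed
    have fZ: "finite Z" unfolding Z_def using J by simp
    have "card {tup\<in>TT. bad tup x} \<le> card (PiE {..<l} (\<lambda>_. Z))"
      using sub fZ by (intro card_mono finite_PiE) auto
    also have "\<dots> = card Z ^ l" by (simp add: card_PiE)
    finally have "2^l * card {tup\<in>TT. bad tup x} \<le> 2^l * card Z ^ l" by simp
    also have "\<dots> = (2 * card Z) ^ l" by (simp add: power_mult_distrib)
    also have "\<dots> \<le> (2 ^ card J) ^ l" using hz by (rule power_mono) simp
    finally show ?thesis using cTT by simp
  qed
  have "\<exists>tup\<in>TT. card {x\<in>X. bad tup x} * 2^l \<le> card X"
  proof (rule ccontr)
    assume "\<not> ?thesis"
    then have lt: "\<forall>tup\<in>TT. card X < card {x\<in>X. bad tup x} * 2^l" by auto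
    have ne: "TT \<noteq> {}" unfolding TT_def by (simp add: PiE_eq_empty_iff) blast
    have "card TT * card X = (\<Sum>tup\<in>TT. card X)" by simp
    also have "\<dots> < (\<Sum>tup\<in>TT. card {x\<in>X. bad tup x} * 2^l)"
      using lt ne fTT by (intro sum_strict_mono) auto
    also have "\<dots> = 2^l * (\<Sum>tup\<in>TT. \<Sum>x\<in>X. if bad tup x then 1 else 0)"
      by (simp add: card_filter_sum[OF X] sum_distrib_left mult.commute)
    also have "\<dots> = 2^l * (\<Sum>x\<in>X. \<Sum>tup\<in>TT. if bad tup x then 1 else 0)"
      by (simp add: sum.swap[of _ TT X])
    also have "\<dots> = (\<Sum>x\<in>X. 2^l * card {tup\<in>TT. bad tup x})"
      by (simp add: card_filter_sum[OF fTT] sum_distrib_left)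
    also have "\<dots> \<le> (\<Sum>x\<in>X. card TT)" by (intro sum_mono each)
    also have "\<dots> = card TT * card X" by simp
    finally show False by simp
  qed
  then obtain tup where tup: "tup \<in> TT" "card {x\<in>X. bad tup x} * 2^l \<le> card X" by blast
  show ?thesis
    apply (rule exI[of _ "orq l tup p"], rule conjI)
     apply (rule orq_deg[OF J _ deg]) using tupJ[OF tup(1)] apply auto[2]
    using tup(2) unfolding bad_def by simp
qed



definition ind :: "bool \<Rightarrow> 3" where "ind b = (if b then 1 else 0)"

lemma ind_01: "ind b = 0 \<or> ind b = 1" by (simp add: ind_def)

lemma power_2l_mono: "l \<ge> 1 \<Longrightarrow> a \<le> b \<Longrightarrow> (2*l::nat)^a \<le> (2*l)^b"
  by (rule power_increasing) auto

lemma circ_approx_prefix: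
  fixes C :: "gate list" and X :: "bool list set"
  assumes wf: "circ_wf N C" and X: "finite X" and lenX: "\<forall>x\<in>X. length x = N" and l: "l \<ge> 1"
  shows "m \<le> length C \<Longrightarrow> \<exists>P B. (\<forall>g<m. deg_le N ((2*l)^(accum gate_depth C ! g)) (P g)) \<and> B \<subseteq> X \<and>
            card B * 2^l \<le> m * card X \<and>
            (\<forall>x\<in>X - B. \<forall>g<m. P g x = ind (accum (gate_val x) C ! g))"
proof (induction m)
  case 0
  show ?case by (rule exI[of _ "\<lambda>g x. 0"], rule exI[of _ "{}"]) simp
next
  case (Suc m)
  then have m: "m < length C" by simp
  obtain P B where Pdeg: "\<forall>g<m. deg_le N ((2*l)^(accum gate_depth C ! g)) (P g)"
    and BX: "B \<subseteq> X" and Bc: "card B * 2^l \<le> m * card X"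
    and Pc: "\<forall>x\<in>X - B. \<forall>g<m. P g x = ind (accum (gate_val x) C ! g)"
    using Suc m by auto
  define ds where "ds = accum gate_depth C"
  have dsm: "ds ! m = gate_depth (take m ds) (C ! m)" unfolding ds_def by (rule accum_nth[OF m])
  have vm: "accum (gate_val x) C ! m = gate_val x (take m (accum (gate_val x) C)) (C ! m)" for x
    by (rule accum_nth[OF m])
  have wfm: "case C ! m of Lit i b \<Rightarrow> i < N | AndG js \<Rightarrow> (\<forall>j\<in>set js. j < m) | OrG js \<Rightarrow> (\<forall>j\<in>set js. j < m)"
    using wf m unfolding circ_wf_def by blast
  have fXB: "finite (X - B)" using X by simp
  have cXB: "card (X - B) \<le> card X" using X by (intro card_mono) auto
  have fB: "finite B" using BX X by (rule finite_subset)
  have or_step: "\<exists>P' B'. (\<forall>g<Suc m. deg_le N ((2*l)^(ds ! g)) (P' g)) \<and> B' \<subseteq> X \<and>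
            card B' * 2^l \<le> Suc m * card X \<and>
            (\<forall>x\<in>X - B'. \<forall>g<Suc m. P' g x = ind (accum (gate_val x) C ! g))"
    if jsm: "\<forall>j\<in>set js. j < m" and dsj: "ds ! m = Suc (foldr max (map (nth (take m ds)) js) 0)"
      and pdef: "\<And>j x. p j x = (if neg then 1 - P j x else P j x)"
      and val: "\<And>x. accum (gate_val x) C ! m = (if neg then \<not> (\<exists>j\<in>set js. \<not> accum (gate_val x) C ! j) else (\<exists>j\<in>set js. accum (gate_val x) C ! j))"
    for js p neg
  proof -
    define t where "t = foldr max (map (nth (take m ds)) js) 0"
    have dj: "ds ! j \<le> t" if "j \<in> set js" for j
    proof -
      have "take m ds ! j \<in> set (map (nth (take m ds)) js)" using that by auto
      then have "take m ds ! j \<le> t" unfolding t_def by (rule foldr_max_ge)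
      then show ?thesis using jsm that by simp
    qed
    have pdeg: "deg_le N ((2*l)^t) (p j)" if "j \<in> set js" for j
    proof -
      have "deg_le N ((2*l)^(ds ! j)) (P j)" using Pdeg jsm that by (simp add: ds_def)
      then have "deg_le N ((2*l)^t) (P j)" by (rule deg_le_mono) (rule power_2l_mono[OF l dj[OF that]])
      then show ?thesis unfolding pdef[abs_def]
        by (cases neg) (auto intro: deg_le_diff deg_le_const)
    qed
    obtain q where qdeg: "deg_le N (l * (2*(2*l)^t)) q"
      and qc: "card {x\<in>X - B. (\<forall>j\<in>set js. p j x = 0 \<or> p j x = 1) \<and> q x \<noteq> (if \<exists>j\<in>set js. p j x = 1 then 1 else 0)} * 2^l \<le> card (X - B)"
      using or_approx[where X="X-B" and J="set js" and p=p and N=N and a="(2*l)^t" and l=l, OF fXB finite_set pdeg] by blast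
    define E where "E = {x\<in>X - B. (\<forall>j\<in>set js. p j x = 0 \<or> p j x = 1) \<and> q x \<noteq> (if \<exists>j\<in>set js. p j x = 1 then 1 else 0)}"
    define q' where "q' x = (if neg then 1 - q x else q x)" for x
    have q'deg: "deg_le N ((2*l)^(ds ! m)) q'"
    proof -
      have e: "l * (2*(2*l)^t) = (2*l)^(ds!m)" using dsj by (simp add: t_def)
      have "deg_le N ((2*l)^(ds ! m)) q" using qdeg e by simp
      then show ?thesis unfolding q'_def[abs_def] by (cases neg) (auto intro: deg_le_diff deg_le_const)
    qed
    show ?thesis
    proof (intro exI conjI)
      show "\<forall>g<Suc m. deg_le N ((2*l)^(ds ! g)) ((P(m := q')) g)"
        using Pdeg q'deg by (auto simp: less_Suc_eq ds_def)
      show "B \<union> E \<subseteq> X" using BX by (auto simp: E_def)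
      have fE: "finite E" using fXB unfolding E_def by (rule finite_subset[rotated]) auto
      have "card (B \<union> E) * 2^l \<le> (card B + card E) * 2^l" by (simp add: card_Un_le)
      also have "\<dots> = card B * 2^l + card E * 2^l" by (simp add: algebra_simps)
      also have "\<dots> \<le> m * card X + card X" using Bc qc cXB unfolding E_def by linarith
      finally show "card (B \<union> E) * 2^l \<le> Suc m * card X" by simp
      show "\<forall>x\<in>X - (B \<union> E). \<forall>g<Suc m. (P(m := q')) g x = ind (accum (gate_val x) C ! g)"
      proof (intro ballI allI impI)
        fix x g assume x: "x \<in> X - (B \<union> E)" and g: "g < Suc m"
        show "(P(m := q')) g x = ind (accum (gate_val x) C ! g)"
        proof (cases "g = m")
          case False then show ?thesis using Pc x g by auto
        next
          case True
          have Pj: "P j x = ind (accum (gate_val x) C ! j)" if "j \<in> set js" for j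
            using Pc x jsm that by auto
          have p01: "\<forall>j\<in>set js. p j x = 0 \<or> p j x = 1"
            using Pj by (auto simp: pdef ind_def)
          then have qx: "q x = (if \<exists>j\<in>set js. p j x = 1 then 1 else 0)" using x unfolding E_def by auto
          show ?thesis
          proof (cases neg)
            case True
            have "(\<exists>j\<in>set js. p j x = 1) = (\<exists>j\<in>set js. \<not> accum (gate_val x) C ! j)"
              using Pj True by (auto simp: pdef ind_def)
            then show ?thesis using True \<open>g = m\<close> qx val[of x] by (auto simp: q'_def ind_def)
          next
            case False
            have "(\<exists>j\<in>set js. p j x = 1) = (\<exists>j\<in>set js. accum (gate_val x) C ! j)"
              using Pj False by (auto simp: pdef ind_def)
            then show ?thesis using False \<open>g = m\<close> qx val[of x] by (auto simp: q'_def ind_def)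
          qed
        qed
      qed
    qed
  qed
  show ?case
  proof (cases "C ! m")
    case (Lit i b)
    have iN: "i < N" using wfm Lit by simp
    have d0: "ds ! m = 0" using dsm Lit by simp
    define q where "q x = (if b then xv i x else 1 - xv i x)" for x
    have qdeg: "deg_le N 1 q" unfolding q_def[abs_def]
      using deg_le_xv[OF iN, of 1] by (cases b) (auto intro: deg_le_diff deg_le_const)
    show ?thesis
    proof (intro exI conjI)
      show "\<forall>g<Suc m. deg_le N ((2*l)^(accum gate_depth C ! g)) ((P(m := q)) g)"
        using Pdeg qdeg d0 by (auto simp: less_Suc_eq ds_def)
      show "B \<subseteq> X" by fact
      show "card B * 2^l \<le> Suc m * card X" using Bc by simp
      show "\<forall>x\<in>X - B. \<forall>g<Suc m. (P(m := q)) g x = ind (accum (gate_val x) C ! g)"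
      proof (intro ballI allI impI)
        fix x g assume x: "x \<in> X - B" and g: "g < Suc m"
        show "(P(m := q)) g x = ind (accum (gate_val x) C ! g)"
        proof (cases "g = m")
          case False then show ?thesis using Pc x g by auto
        next
          case True
          then show ?thesis using vm[of x] Lit by (auto simp: q_def xv_def ind_def)
        qed
      qed
    qed
  next
    case (AndG js)
    have jsm: "\<forall>j\<in>set js. j < m" using wfm AndG by simp
    have val: "accum (gate_val x) C ! m = (if True then \<not> (\<exists>j\<in>set js. \<not> accum (gate_val x) C ! j) else (\<exists>j\<in>set js. accum (gate_val x) C ! j))" for x
      using vm[of x] AndG jsm by auto
    show ?thesis using or_step[OF jsm _ _ val, of "\<lambda>j x. 1 - P j x"] dsm AndG by (simp add: ds_def)
  next
    case (OrG js)
    have jsm: "\<forall>j\<in>set js. j < m" using wfm OrG by simp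
    have val: "accum (gate_val x) C ! m = (if False then \<not> (\<exists>j\<in>set js. \<not> accum (gate_val x) C ! j) else (\<exists>j\<in>set js. accum (gate_val x) C ! j))" for x
      using vm[of x] OrG jsm by auto
    show ?thesis using or_step[OF jsm _ _ val, of "P"] dsm OrG by (simp add: ds_def)
  qed
qed

theorem circ_approx:
  fixes C :: "gate list" and X :: "bool list set"
  assumes wf: "circ_wf N C" and X: "finite X" and lenX: "\<forall>x\<in>X. length x = N" and l: "l \<ge> 1"
    and dep: "circ_depth C \<le> d"
  shows "\<exists>P B. deg_le N ((2*l)^d) P \<and> B \<subseteq> X \<and> card B * 2^l \<le> length C * card X \<and>
            (\<forall>x\<in>X - B. P x = ind (circ_out C x))"
proof -
  obtain P B where Pdeg: "\<forall>g<length C. deg_le N ((2*l)^(accum gate_depth C ! g)) (P g)"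
    and BX: "B \<subseteq> X" and Bc: "card B * 2^l \<le> length C * card X"
    and Pc: "\<forall>x\<in>X - B. \<forall>g<length C. P g x = ind (accum (gate_val x) C ! g)"
    using circ_approx_prefix[OF wf X lenX l, of "length C"] by auto
  have ne: "C \<noteq> []" using wf by (simp add: circ_wf_def)
  define og where "og = length C - 1"
  have og: "og < length C" using ne by (simp add: og_def)
  have "accum gate_depth C ! og \<le> circ_depth C"
    unfolding circ_depth_accum using og by (intro foldr_max_ge) simp
  then have "deg_le N ((2*l)^d) (P og)" using Pdeg og dep
    by (meson deg_le_mono order_trans power_2l_mono[OF l])
  moreover have "\<forall>x\<in>X - B. P og x = ind (circ_out C x)"
  proof
    fix x assume "x \<in> X - B"
    moreover have "circ_out C x = accum (gate_val x) C ! og"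
    proof -
      have "accum (gate_val x) C \<noteq> []" using ne by (metis accum_length length_0_conv)
      then show ?thesis unfolding circ_out_accum og_def by (simp add: last_conv_nth)
    qed
    ultimately show "P og x = ind (circ_out C x)" using Pc og by simp
  qed
  ultimately show ?thesis using BX Bc by blast
qed



definition Wn :: "nat \<Rightarrow> bool list set" where "Wn n = {w. length w = n}"

lemma finite_Wn[simp]: "finite (Wn n)"
  using finite_lists_length_eq[of "UNIV::bool set" n] by (simp add: Wn_def)

lemma card_Wn: "card (Wn n) = 2 ^ n"
  using card_lists_length_eq[of "UNIV::bool set" n] by (simp add: Wn_def)

definition delta :: "nat \<Rightarrow> bool list \<Rightarrow> bool list \<Rightarrow> 3" where
  "delta n a w = (\<Prod>i<n. - (1 + yv (a!i) * yv (w!i)))"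

lemma delta_deg: "deg_le n n (delta n a)"
proof -
  have "deg_le n (n * 1) (\<lambda>w. \<Prod>i<n. - (1 + yv (a!i) * ymon {i} w))"
  proof (rule deg_le_prod)
    fix i assume "i < n"
    then have "deg_le n 1 (ymon {i})" by (intro deg_le_monomial) auto
    then show "deg_le n 1 (\<lambda>w. - (1 + yv (a!i) * ymon {i} w))"
      by (intro deg_le_neg deg_le_add deg_le_const deg_le_smult)
  qed
  then show ?thesis unfolding delta_def[abs_def] by (simp add: ymon_def)
qed

lemma delta_val:
  assumes "length a = n" "length w = n"
  shows "delta n a w = (if a = w then 1 else 0)"
proof (cases "a = w")
  case True
  have m2: "(-2::3) = 1" by (simp add: eq_neg_iff_add_eq_0)
  have "- (1 + yv (w!i) * yv (w!i)) = (1::3)" for i using m2 by simp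
  then have "delta n w w = 1" unfolding delta_def by (intro prod.neutral) blast
  then show ?thesis using True by simp
next
  case False
  then obtain i where i: "i < n" "a ! i \<noteq> w ! i" using assms by (auto simp: list_eq_iff_nth_eq)
  have z: "- (1 + yv (a!i) * yv (w!i)) = (0::3)" using i by (cases "a!i") (auto simp: yv_def)
  have "delta n a w = 0" unfolding delta_def
    apply (rule prod_zero, simp) apply (rule bexI[of _ i]) using z i by auto
  then show ?thesis using False by simp
qed

lemma all_deg: "deg_le n n f"
proof -
  have "deg_le n n (\<lambda>w. \<Sum>a\<in>Wn n. f a * delta n a w)"
    by (intro deg_le_sum deg_le_smult delta_deg) simp
  then show ?thesis
  proof (rule deg_le_cong)
    fix w :: "bool list" assume w: "length w = n"
    have "(\<Sum>a\<in>Wn n. f a * delta n a w) = (\<Sum>a\<in>Wn n. if a = w then f a else 0)"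
      using w by (intro sum.cong refl) (auto simp: delta_val Wn_def)
    also have "\<dots> = f w" using w by (simp add: sum.delta[OF finite_Wn]) (simp add: Wn_def)
    finally show "(\<Sum>a\<in>Wn n. f a * delta n a w) = f w" .
  qed
qed

lemma ymon_full_split:
  assumes "S \<subseteq> {..<n}"
  shows "ymon {..<n} x * ymon ({..<n} - S) x = ymon S x"
proof -
  have "({..<n} - ({..<n} - S)) \<union> (({..<n} - S) - {..<n}) = S" using assms by auto
  then show ?thesis using mono_mult[of "{..<n}" "{..<n} - S" x] by simp
qed

lemma restrict_mon:
  assumes H: "deg_le n D H" and G: "G \<subseteq> Wn n" and HG: "\<forall>x\<in>G. H x = ymon {..<n} x"
    and S: "S \<subseteq> {..<n}"
  shows "\<exists>h. deg_le n (n div 2 + D) h \<and> (\<forall>x\<in>G. ymon S x = h x)"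
proof (cases "card S \<le> n div 2")
  case True
  then have "deg_le n (n div 2 + D) (ymon S)" using S by (intro deg_le_monomial) auto
  then show ?thesis by blast
next
  case False
  have cS: "card S \<le> n" using S card_mono[of "{..<n}" S] by simp
  have "card ({..<n} - S) = n - card S" using S by (simp add: card_Diff_subset finite_subset)
  then have c: "card ({..<n} - S) \<le> n div 2" using False cS by linarith
  have "deg_le n (D + n div 2) (\<lambda>x. H x * ymon ({..<n} - S) x)"
    using H c by (intro deg_le_mult deg_le_monomial) auto
  moreover have "\<forall>x\<in>G. ymon S x = H x * ymon ({..<n} - S) x"
    using HG ymon_full_split[OF S] by simp
  moreover have "D + n div 2 = n div 2 + D" by simp
  ultimately show ?thesis by auto
qed

lemma restrict_all:
  assumes H: "deg_le n D H" and G: "G \<subseteq> Wn n" and HG: "\<forall>x\<in>G. H x = ymon {..<n} x"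
  shows "\<exists>h. deg_le n (n div 2 + D) h \<and> (\<forall>x\<in>G. f x = h x)"
proof -
  obtain c where c: "\<forall>w. length w = n \<longrightarrow> f w = (\<Sum>S\<in>LS n n. c S * ymon S w)"
    using all_deg[of n f] unfolding deg_le_def by blast
  have "\<forall>S\<in>LS n n. \<exists>h. deg_le n (n div 2 + D) h \<and> (\<forall>x\<in>G. ymon S x = h x)"
    using restrict_mon[OF H G HG] by (auto simp: LS_def)
  then obtain hS where hS: "\<forall>S\<in>LS n n. deg_le n (n div 2 + D) (hS S) \<and> (\<forall>x\<in>G. ymon S x = hS S x)"
    using bchoice[of "LS n n" "\<lambda>S h. deg_le n (n div 2 + D) h \<and> (\<forall>x\<in>G. ymon S x = h x)"] by blast
  have "deg_le n (n div 2 + D) (\<lambda>w. \<Sum>S\<in>LS n n. c S * hS S w)"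
    using hS by (intro deg_le_sum deg_le_smult) auto
  moreover have "\<forall>x\<in>G. f x = (\<Sum>S\<in>LS n n. c S * hS S x)"
  proof
    fix x assume x: "x \<in> G"
    then have "length x = n" using G by (auto simp: Wn_def)
    then have "f x = (\<Sum>S\<in>LS n n. c S * ymon S x)" using c by simp
    also have "\<dots> = (\<Sum>S\<in>LS n n. c S * hS S x)" using hS x by (intro sum.cong) auto
    finally show "f x = (\<Sum>S\<in>LS n n. c S * hS S x)" .
  qed
  ultimately show ?thesis by blast
qed

theorem smolensky_count:
  assumes H: "deg_le n D H" and G: "G \<subseteq> Wn n" and HG: "\<forall>x\<in>G. H x = ymon {..<n} x"
  shows "card G \<le> card (LS n (n div 2 + D))"
proof -
  define K where "K = n div 2 + D"
  define \<Phi> where "\<Phi> c = restrict (\<lambda>w. \<Sum>S\<in>LS n K. c S * ymon S w) G" for c :: "nat set \<Rightarrow> 3"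
  have fG: "finite G" using G by (rule finite_subset) simp
  have sub: "PiE G (\<lambda>_. UNIV::3 set) \<subseteq> \<Phi> ` PiE (LS n K) (\<lambda>_. UNIV)"
  proof
    fix g assume g: "g \<in> PiE G (\<lambda>_. UNIV::3 set)"
    obtain h where h: "deg_le n K h" "\<forall>x\<in>G. g x = h x"
      using restrict_all[OF H G HG, of g] unfolding K_def by blast
    obtain c where c: "\<forall>w. length w = n \<longrightarrow> h w = (\<Sum>S\<in>LS n K. c S * ymon S w)"
      using h(1) unfolding deg_le_def by blast
    have "\<Phi> (restrict c (LS n K)) = g"
    proof (rule ext)
      fix x
      show "\<Phi> (restrict c (LS n K)) x = g x"
      proof (cases "x \<in> G")
        case True
        then have "length x = n" using G by (auto simp: Wn_def)
        then show ?thesis using True c h(2) by (simp add: \<Phi>_def)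
      next
        case False
        then show ?thesis using g by (simp add: \<Phi>_def PiE_def extensional_def)
      qed
    qed
    then show "g \<in> \<Phi> ` PiE (LS n K) (\<lambda>_. UNIV)" by force
  qed
  have "3 ^ card G = card (PiE G (\<lambda>_. UNIV::3 set))" using fG by (simp add: card_PiE)
  also have "\<dots> \<le> card (\<Phi> ` PiE (LS n K) (\<lambda>_. UNIV))"
    using sub by (intro card_mono finite_imageI finite_PiE) auto
  also have "\<dots> \<le> card (PiE (LS n K) (\<lambda>_. UNIV::3 set))" by (rule card_image_le) (simp add: finite_PiE)
  also have "\<dots> = 3 ^ card (LS n K)" by (simp add: card_PiE)
  finally have le3: "(3::nat) ^ card G \<le> 3 ^ card (LS n K)" .
  show ?thesis using power_le_imp_le_exp[of "3::nat" "card G" "card (LS n K)"] le3 unfolding K_def by simp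
qed



lemma LS_bound: "2 * card (LS (2*m) (m + D)) \<le> 4^m + 2*(D+1)*((2*m) choose m)"
proof -
  define U where "U = {..<2*m}"
  define A where "A = {S. S \<subseteq> U \<and> card S < m}"
  define B where "B = {S. S \<subseteq> U \<and> m \<le> card S \<and> card S \<le> m + D}"
  have fU: "finite U" by (simp add: U_def)
  have fP: "finite (Pow U)" using fU by simp
  have fA: "finite A" using fP by (rule finite_subset[rotated]) (auto simp: A_def)
  have fB: "finite B" using fP by (rule finite_subset[rotated]) (auto simp: B_def)
  have "LS (2*m) (m + D) \<subseteq> A \<union> B" by (auto simp: LS_def A_def B_def U_def)
  then have c1: "card (LS (2*m) (m + D)) \<le> card A + card B"
  proof -
    have "card (LS (2*m) (m + D)) \<le> card (A \<union> B)" using fA fB \<open>LS (2*m) (m + D) \<subseteq> A \<union> B\<close> by (intro card_mono) auto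
    also have "\<dots> \<le> card A + card B" by (rule card_Un_le)
    finally show ?thesis .
  qed
  define c where "c S = U - S" for S
  have inj: "inj_on c A" unfolding inj_on_def c_def A_def by blast
  have cardc: "card (c S) = 2*m - card S" if "S \<subseteq> U" for S
    using that fU by (simp add: c_def card_Diff_subset finite_subset U_def)
  have disj: "A \<inter> c ` A = {}"
  proof -
    { fix S assume S: "S \<in> A" and cS: "c S \<in> A"
      have "card (c S) = 2*m - card S" using S cardc by (auto simp: A_def)
      then have False using S cS by (auto simp: A_def) }
    then show ?thesis by blast
  qed
  have sub: "A \<union> c ` A \<subseteq> Pow U" by (auto simp: A_def c_def)
  have "2 * card A = card A + card (c ` A)" using card_image[OF inj] by simp
  also have "\<dots> = card (A \<union> c ` A)" using disj fA by (simp add: card_Un_disjoint)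
  also have "\<dots> \<le> card (Pow U)" using sub fP by (rule card_mono[rotated])
  also have "\<dots> = 4^m" using fU by (simp add: card_Pow U_def power_mult)
  finally have cA: "2 * card A \<le> 4^m" .
  have "B = (\<Union>k\<in>{m..m+D}. {S. S \<subseteq> U \<and> card S = k})" by (auto simp: B_def)
  then have "card B \<le> (\<Sum>k\<in>{m..m+D}. card {S. S \<subseteq> U \<and> card S = k})"
    by (simp add: card_UN_le)
  also have "\<dots> = (\<Sum>k\<in>{m..m+D}. (2*m) choose k)" using fU by (simp add: n_subsets U_def)
  also have "\<dots> \<le> (\<Sum>k\<in>{m..m+D}. (2*m) choose m)" by (intro sum_mono binomial_maximum')
  also have "\<dots> = (D+1) * ((2*m) choose m)" by simp
  finally have cB: "card B \<le> (D+1) * ((2*m) choose m)" .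
  show ?thesis using c1 cA cB by linarith
qed

lemma central_rec: "(m+1) * ((2*m+2) choose (m+1)) = 2*(2*m+1) * ((2*m) choose m)"
proof -
  define a where "a = (2*m+1) choose m"
  define b where "b = (2*m) choose m"
  define c where "c = (2*m+2) choose (m+1)"
  have e1: "(2*m+2) * a = c * (m+1)"
    using Suc_times_binomial_eq[of "2*m+1" m] unfolding a_def c_def by (simp del: binomial_Suc_Suc)
  have e2: "(2*m+1) * b = ((2*m+1) choose (m+1)) * (m+1)"
    using Suc_times_binomial_eq[of "2*m" m] unfolding b_def by (simp del: binomial_Suc_Suc)
  have e3: "(2*m+1) choose (m+1) = a"
    using binomial_symmetric[of "m+1" "2*m+1"] unfolding a_def by (simp del: binomial_Suc_Suc)
  have "(m+1) * ((m+1) * c) = (m+1) * (c * (m+1))" by simp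
  also have "\<dots> = (m+1) * ((2*m+2) * a)" by (simp only: e1)
  also have "\<dots> = 2 * (m+1) * (a * (m+1))" by (simp add: algebra_simps)
  also have "\<dots> = 2 * (m+1) * ((2*m+1) * b)" using e2 e3 by simp
  also have "\<dots> = (m+1) * (2*(2*m+1) * b)" by (simp add: algebra_simps)
  finally have "(m+1) * c = 2*(2*m+1) * b" by (simp only: mult_left_cancel)
  then show ?thesis by (simp add: b_def c_def)
qed

lemma central_bound: "((2*m) choose m)^2 * (2*m+1) \<le> 16^m"
proof (induction m)
  case 0 then show ?case by simp
next
  case (Suc m)
  define c where "c = (2*m) choose m"
  define c' where "c' = (2*m+2) choose (m+1)"
  have r: "(m+1) * c' = 2*(2*m+1) * c" using central_rec[of m] by (simp add: c_def c'_def)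
  have IH: "c^2 * (2*m+1) \<le> 16^m" using Suc by (simp add: c_def)
  have "(m+1)^2 * (c'^2 * (2*m+3)) = ((m+1) * c')^2 * (2*m+3)" by (simp only: power_mult_distrib mult.assoc)
  also have "\<dots> = 4 * (2*m+1) * (2*m+3) * (c^2 * (2*m+1))" unfolding r by (simp add: power2_eq_square algebra_simps)
  also have "\<dots> \<le> 4 * (2*m+1) * (2*m+3) * 16^m" using IH by simp
  also have "\<dots> \<le> 16 * (m+1)^2 * 16^m"
  proof -
    have "4 * (2*m+1) * (2*m+3) \<le> 16 * (m+1)^2" by (simp add: power2_eq_square algebra_simps)
    then show ?thesis by simp
  qed
  also have "\<dots> = (m+1)^2 * 16^(Suc m)" by simp
  finally have "c'^2 * (2*m+3) \<le> 16^(Suc m)" by (simp only: mult_le_cancel1) simp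
  moreover have "(2 * Suc m) choose (Suc m) = c'" unfolding c'_def by (simp del: binomial_Suc_Suc)
  moreover have "2 * Suc m + 1 = 2*m+3" by simp
  ultimately show ?case by (simp only:)
qed

lemma sq_le_exp: "j \<ge> 4 \<Longrightarrow> j^2 \<le> (2::nat)^j"
proof (induction j rule: dec_induct)
  case base then show ?case by simp
next
  case (step j)
  have "(Suc j)^2 = j^2 + 2*j + 1" by (simp add: power2_eq_square)
  also have "\<dots> \<le> j^2 + j^2"
  proof -
    have "4*j \<le> j*j" using mult_le_mono1[of 4 j j] step(1) by simp
    then have "2*j+1 \<le> j*j" using step(1) by linarith
    then show ?thesis by (simp add: power2_eq_square)
  qed
  also have "\<dots> \<le> 2^Suc j" using step(3) by simp
  finally show ?case .
qed

lemma lin_exp: "\<exists>j. A * (j+1) \<le> (2::nat)^j"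
proof -
  define j where "j = 2*A + 4"
  have "A * (j+1) \<le> j * j" unfolding j_def by (simp add: algebra_simps)
  also have "\<dots> \<le> 2^j" using sq_le_exp[of j] by (simp add: j_def power2_eq_square)
  finally show ?thesis by blast
qed



lemma params: "\<exists>m l. m \<ge> 1 \<and> l \<ge> 1 \<and> 16 * m * ((4*m)^e + e) \<le> (2::nat)^l \<and> 4 * ((2*l)^d + 1)^2 \<le> m"
proof -
  define K where "K = 6*e + 8"
  obtain j where j: "(5 + 2*d*K + 2*d) * (j+1) \<le> (2::nat)^j" using lin_exp by blast
  define r where "r = (2::nat)^j - 1"
  have r1: "r + 1 = 2^j" by (simp add: r_def)
  have jr: "5 + 2*d*K + 2*d*j \<le> 2^j"
  proof -
    have "5 + 2*d*K + 2*d*j \<le> (5 + 2*d*K + 2*d) * (j+1)" by (simp add: algebra_simps)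
    then show ?thesis using j by linarith
  qed
  define m where "m = (2::nat)^r"
  define l where "l = 4 + r + (r+2)*e + e"
  have A: "16 * m * ((4*m)^e + e) \<le> 2^l"
  proof -
    have p4: "4*m = (2::nat)^(r+2)" by (simp add: m_def power_add)
    have p: "(4*m)^e = 2^((r+2)*e)" by (simp only: p4 power_mult)
    have ge1: "(1::nat) \<le> 2^((r+2)*e)" by simp
    have "(4*m)^e + e \<le> 2^((r+2)*e) * (e+1)" unfolding p using ge1
      by (simp add: algebra_simps)
    also have "\<dots> \<le> 2^((r+2)*e) * 2^e"
    proof -
      have "e + 1 \<le> 2^e" using Suc_leI[OF less_exp[of e]] by simp
      then show ?thesis by (rule mult_le_mono2)
    qed
    finally have "16 * m * ((4*m)^e + e) \<le> 16 * m * (2^((r+2)*e) * 2^e)" by simp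
    also have "\<dots> = 2^l"
    proof -
      have p3: "(2::nat)^e * (2^e * 2^e) = 2^(3*e)"
        by (simp only: power_add[symmetric]) (simp add: numeral_3_eq_3)
      show ?thesis by (simp add: m_def l_def power_add p3)
    qed
    finally show ?thesis .
  qed
  have B: "4 * ((2*l)^d + 1)^2 \<le> m"
  proof -
    have K1: "1 \<le> K" by (simp add: K_def)
    have l2: "2*l \<le> K * (r+1)" by (simp add: l_def K_def algebra_simps)
    have pw: "(2*l)^d \<le> (K*(r+1))^d" by (rule power_mono[OF l2]) simp
    have "1 \<le> K*(r+1)" using K1 by simp
    then have one: "1 \<le> (K*(r+1))^d" by (rule one_le_power)
    have "(2*l)^d + 1 \<le> (K*(r+1))^d + (K*(r+1))^d" using pw one by linarith
    also have "\<dots> = 2 * K^d * 2^(j*d)"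
    proof -
      have "(K*(r+1))^d = K^d * 2^(j*d)" unfolding r1 by (simp add: power_mult_distrib power_mult)
      then show ?thesis by simp
    qed
    finally have b: "(2*l)^d + 1 \<le> 2 * K^d * 2^(j*d)" .
    have "4 * ((2*l)^d + 1)^2 \<le> 4 * (2 * K^d * 2^(j*d))^2" using power_mono[OF b, of 2] by simp
    also have "\<dots> = 16 * (K^d)^2 * 2^(2*j*d)" by (simp add: power_mult_distrib power_mult[symmetric] algebra_simps)
    also have "\<dots> \<le> 16 * (2^K)^(2*d) * 2^(2*j*d)"
    proof -
      have "K^d \<le> (2^K)^d" using less_exp[of K] by (intro power_mono) auto
      then have "(K^d)^2 \<le> ((2^K)^d)^2" by (intro power_mono) auto
      then show ?thesis by (simp add: power_mult[symmetric] mult.commute mult.assoc)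
    qed
    also have "\<dots> = 2^(4 + 2*d*K + 2*d*j)"
      by (simp add: power_add power_mult[symmetric] algebra_simps)
    also have "\<dots> \<le> 2^r"
    proof -
      have "4 + 2*d*K + 2*d*j \<le> r" using jr r1 by linarith
      then show ?thesis by (rule power_increasing) simp
    qed
    finally show ?thesis by (simp add: m_def)
  qed
  show ?thesis
    apply (rule exI[of _ m], rule exI[of _ l])
    using A B by (simp add: m_def l_def)
qed



lemma count_len: "count_list x True + count_list x False = length x"
  by (induction x) auto

lemma ymon_full_count: "length x = n \<Longrightarrow> ymon {..<n} x = (-1)^(count_list x True)"
proof (induction x arbitrary: n)
  case Nil then show ?case by (simp add: ymon_def)
next
  case (Cons a x)
  then obtain n' where n: "n = Suc n'" "length x = n'" by auto
  have "ymon {..<n} (a # x) = yv a * ymon {..<n'} x"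
    unfolding ymon_def n(1) prod.lessThan_Suc_shift by simp
  then show ?case using Cons.IH[OF n(2)] by (simp add: yv_def)
qed

lemma ymon_append:
  assumes x: "length x = n" and S: "finite S"
  shows "ymon S (x @ z) = ymon (S \<inter> {..<n}) x * (\<Prod>i\<in>S - {..<n}. yv (z ! (i - n)))"
proof -
  have "ymon S (x @ z) = (\<Prod>i\<in>S \<inter> {..<n}. yv ((x@z) ! i)) * (\<Prod>i\<in>S - {..<n}. yv ((x@z) ! i))"
    unfolding ymon_def using S by (subst prod.Int_Diff[of S _ "{..<n}"]) auto
  also have "(\<Prod>i\<in>S \<inter> {..<n}. yv ((x@z) ! i)) = ymon (S \<inter> {..<n}) x"
    unfolding ymon_def using x by (intro prod.cong) (auto simp: nth_append)
  also have "(\<Prod>i\<in>S - {..<n}. yv ((x@z) ! i)) = (\<Prod>i\<in>S - {..<n}. yv (z ! (i - n)))"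
    using x by (intro prod.cong) (auto simp: nth_append)
  finally show ?thesis .
qed

lemma deg_le_append:
  assumes P: "deg_le (n + k) D P" and z: "length z = k"
  shows "deg_le n D (\<lambda>x. P (x @ z))"
proof -
  obtain c where c: "\<forall>w. length w = n + k \<longrightarrow> P w = (\<Sum>S\<in>LS (n+k) D. c S * ymon S w)"
    using P unfolding deg_le_def by blast
  have "deg_le n D (\<lambda>x. \<Sum>S\<in>LS (n+k) D. (c S * (\<Prod>i\<in>S - {..<n}. yv (z ! (i - n)))) * ymon (S \<inter> {..<n}) x)"
  proof (intro deg_le_sum deg_le_smult deg_le_monomial, simp)
    fix S assume S: "S \<in> LS (n+k) D"
    show "S \<inter> {..<n} \<subseteq> {..<n}" by auto
    have "finite S" using S by (auto simp: LS_def intro: finite_subset)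
    then have "card (S \<inter> {..<n}) \<le> card S" by (intro card_mono) auto
    then show "card (S \<inter> {..<n}) \<le> D" using S by (auto simp: LS_def)
  qed
  then show ?thesis
  proof (rule deg_le_cong)
    fix x :: "bool list" assume x: "length x = n"
    have "P (x @ z) = (\<Sum>S\<in>LS (n+k) D. c S * ymon S (x @ z))" using c x z by simp
    also have "\<dots> = (\<Sum>S\<in>LS (n+k) D. (c S * (\<Prod>i\<in>S - {..<n}. yv (z ! (i - n)))) * ymon (S \<inter> {..<n}) x)"
    proof (intro sum.cong refl)
      fix S assume S: "S \<in> LS (n+k) D"
      have "finite S" using S by (auto simp: LS_def intro: finite_subset)
      then show "c S * ymon S (x @ z) = (c S * (\<Prod>i\<in>S - {..<n}. yv (z ! (i - n)))) * ymon (S \<inter> {..<n}) x"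
        using ymon_append[OF x] by (simp add: algebra_simps)
    qed
    finally show "(\<Sum>S\<in>LS (n+k) D. (c S * (\<Prod>i\<in>S - {..<n}. yv (z ! (i - n)))) * ymon (S \<inter> {..<n}) x) = P (x @ z)" by simp
  qed
qed

definition coef :: "nat \<Rightarrow> 3" where "coef t = (-1)^(Suc t) - (-1)^t"

lemma telescope3:
  assumes "c \<le> n"
  shows "1 + (\<Sum>t<n. coef t * ind (t < c)) = (-1)^c"
proof -
  have "(\<Sum>t<n. coef t * ind (t < c)) = (\<Sum>t\<in>{..<n}. if t < c then coef t else 0)"
    by (intro sum.cong) (auto simp: ind_def)
  also have "\<dots> = (\<Sum>t\<in>{t\<in>{..<n}. t < c}. coef t)" by (rule sum.inter_filter[symmetric]) simp
  also have "{t\<in>{..<n}. t < c} = {..<c}" using assms by auto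
  also have "(\<Sum>t<c. coef t) = (-1)^c - (-1)^0" unfolding coef_def by (rule sum_lessThan_telescope)
  finally show ?thesis by simp
qed

definition pad :: "nat \<Rightarrow> nat \<Rightarrow> bool list" where
  "pad n t = replicate (n - t) True @ replicate t False"

lemma pad_len[simp]: "t \<le> n \<Longrightarrow> length (pad n t) = n"
  by (simp add: pad_def)

lemma count_rep: "count_list (replicate k a) b = (if a = b then k else 0)"
  by (induction k) auto

lemma MAJ_pad:
  assumes x: "length x = n" and t: "t < n"
  shows "(x @ pad n t \<in> MAJ) \<longleftrightarrow> t < count_list x True"
proof -
  have cl: "count_list x True + count_list x False = n" using count_len[of x] x by simp
  have cT: "count_list (x @ pad n t) True = count_list x True + (n - t)"
    by (simp add: pad_def count_list_append count_rep)
  have cF: "count_list (x @ pad n t) False = count_list x False + t"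
    by (simp add: pad_def count_list_append count_rep)
  have ne: "x @ pad n t \<noteq> []" using t by (simp add: pad_def)
  show ?thesis unfolding MAJ_def using ne cT cF cl t by auto
qed



lemma final_arith:
  fixes W cU cG cL C D n s l m :: nat
  assumes i: "cU * 2^l \<le> n * s * W" and ii: "8 * n * s \<le> 2^l" and ns: "n * s > 0"
    and iii: "W \<le> cG + cU" and iv: "2 * cG \<le> W + 2*(D+1)*C"
    and v: "C^2 * (2*m+1) \<le> W^2" and W0: "W > 0" and B: "4 * (D+1)^2 \<le> m"
  shows False
proof -
  have "(n*s) * (8 * cU) \<le> (n*s) * W"
  proof -
    have "(n*s) * (8 * cU) = (8*n*s) * cU" by simp
    also have "\<dots> \<le> 2^l * cU" using ii by (rule mult_le_mono1)
    also have "\<dots> \<le> n * s * W" using i by (simp add: mult.commute)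
    finally show ?thesis .
  qed
  then have a: "8 * cU \<le> W" using ns mult_le_cancel1[of "n*s" "8*cU" W] by blast
  obtain E where E: "E = (D+1)*C" by blast
  have iv': "2 * cG \<le> W + 2*E" using iv E by (simp add: mult.assoc)
  have b: "3 * W \<le> 8*E" using a iii iv' by linarith
  obtain P where P: "P = (D+1)^2" by blast
  obtain Q where Q: "Q = C^2" by blast
  obtain R where R: "R = W^2" by blast
  have E2: "E * E = P * Q" unfolding E P Q by (simp add: power2_eq_square algebra_simps)
  have "(3*W) * (3*W) \<le> (8*E) * (8*E)" using b by (rule mult_le_mono[OF _ b])
  then have c: "9 * R \<le> 64 * (P * Q)" unfolding R E2[symmetric] by (simp add: power2_eq_square algebra_simps)
  define k where "k = 2*m+1"
  have v': "Q * k \<le> R" using v unfolding Q R k_def .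
  have "9 * R * k \<le> 64 * (P * Q) * k" using c by (rule mult_le_mono1)
  also have "\<dots> = 64 * P * (Q * k)" by (simp add: algebra_simps)
  also have "\<dots> \<le> 64 * P * R" using v' by (rule mult_le_mono2)
  finally have "R * (9 * k) \<le> R * (64 * P)" by (simp add: algebra_simps)
  moreover have "R > 0" using W0 R by simp
  ultimately have d: "9 * k \<le> 64 * P" by simp
  have B': "4 * P \<le> m" using B P by simp
  have e1: "64 * P \<le> 16 * m" using B' by simp
  have e2: "9 * k \<le> 16 * m" using d e1 by (rule order_trans)
  then show False unfolding k_def by simp
qed

lemma key:
  fixes CC :: "gate list"
  assumes wf: "circ_wf (4*m) CC" and sz: "length CC \<le> s" and dep: "circ_depth CC \<le> d"
    and corr: "\<forall>w. length w = 4*m \<longrightarrow> (circ_out CC w \<longleftrightarrow> w \<in> MAJ)"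
    and m1: "m \<ge> 1" and l1: "l \<ge> 1" and A: "8 * (2*m) * s \<le> 2^l" and B: "4 * ((2*l)^d + 1)^2 \<le> m"
  shows False
proof -
  define n where "n = 2*m"
  define D where "D = (2*l)^d"
  have N: "4*m = n + n" by (simp add: n_def)
  define X where "X t = (\<lambda>x. x @ pad n t) ` Wn n" for t
  have fX: "finite (X t)" for t by (simp add: X_def)
  have injX: "inj_on (\<lambda>x. x @ pad n t) S" for t S by (auto intro: inj_onI)
  have cX: "card (X t) = 2^n" for t unfolding X_def by (simp add: card_image[OF injX] card_Wn)
  have lenX: "t < n \<Longrightarrow> \<forall>x\<in>X t. length x = 4*m" for t by (auto simp: X_def Wn_def N)
  have "\<forall>t\<in>{..<n}. \<exists>PB. deg_le (4*m) D (fst PB) \<and> snd PB \<subseteq> X t \<and> card (snd PB) * 2^l \<le> length CC * card (X t) \<and>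
            (\<forall>x\<in>X t - snd PB. fst PB x = ind (circ_out CC x))"
  proof
    fix t assume "t \<in> {..<n}"
    then have "\<exists>P B. deg_le (4*m) ((2*l)^d) P \<and> B \<subseteq> X t \<and> card B * 2^l \<le> length CC * card (X t) \<and>
            (\<forall>x\<in>X t - B. P x = ind (circ_out CC x))"
      using circ_approx[OF wf fX lenX l1 dep] by simp
    then show "\<exists>PB. deg_le (4*m) D (fst PB) \<and> snd PB \<subseteq> X t \<and> card (snd PB) * 2^l \<le> length CC * card (X t) \<and>
            (\<forall>x\<in>X t - snd PB. fst PB x = ind (circ_out CC x))" unfolding D_def by auto
  qed
  then obtain PB where PB: "\<forall>t\<in>{..<n}. deg_le (4*m) D (fst (PB t)) \<and> snd (PB t) \<subseteq> X t \<and> card (snd (PB t)) * 2^l \<le> length CC * card (X t) \<and>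
            (\<forall>x\<in>X t - snd (PB t). fst (PB t) x = ind (circ_out CC x))"
    using bchoice by metis
  define Q where "Q t x = fst (PB t) (x @ pad n t)" for t x
  define Bad where "Bad t = {x\<in>Wn n. x @ pad n t \<in> snd (PB t)}" for t
  define U where "U = (\<Union>t<n. Bad t)"
  define G where "G = Wn n - U"
  define H where "H x = 1 + (\<Sum>t<n. coef t * Q t x)" for x
  have Qdeg: "deg_le n D (Q t)" if "t < n" for t
  proof -
    have "deg_le (n + n) D (fst (PB t))" using PB that N by auto
    then show ?thesis unfolding Q_def[abs_def] by (rule deg_le_append) (simp add: that less_imp_le)
  qed
  have Hdeg: "deg_le n D H" unfolding H_def[abs_def]
    by (intro deg_le_add deg_le_const deg_le_sum deg_le_smult Qdeg) auto
  have cBad: "card (Bad t) * 2^l \<le> s * 2^n" if t: "t < n" for t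
  proof -
    have sub: "(\<lambda>x. x @ pad n t) ` Bad t \<subseteq> snd (PB t)" by (auto simp: Bad_def)
    have fin: "finite (snd (PB t))" using PB t fX finite_subset by blast
    have "card (Bad t) = card ((\<lambda>x. x @ pad n t) ` Bad t)" by (simp add: card_image[OF injX])
    also have "\<dots> \<le> card (snd (PB t))" using sub fin by (rule card_mono[rotated])
    finally have "card (Bad t) * 2^l \<le> card (snd (PB t)) * 2^l" by simp
    also have "\<dots> \<le> length CC * 2^n" using PB t cX by auto
    also have "\<dots> \<le> s * 2^n" using sz by simp
    finally show ?thesis .
  qed
  have fU: "finite U" unfolding U_def Bad_def by auto
  have cU: "card U * 2^l \<le> n * s * 2^n"
  proof -
    have "card U \<le> (\<Sum>t<n. card (Bad t))" unfolding U_def by (rule card_UN_le) simp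
    then have "card U * 2^l \<le> (\<Sum>t<n. card (Bad t)) * 2^l" by (rule mult_le_mono1)
    also have "\<dots> = (\<Sum>t<n. card (Bad t) * 2^l)" by (simp add: sum_distrib_right)
    also have "\<dots> \<le> (\<Sum>t<n. s * 2^n)" using cBad by (intro sum_mono) auto
    also have "\<dots> = n * s * 2^n" by simp
    finally show ?thesis .
  qed
  have HG: "\<forall>x\<in>G. H x = ymon {..<n} x"
  proof
    fix x assume x: "x \<in> G"
    then have lx: "length x = n" by (simp add: G_def Wn_def)
    have Qx: "Q t x = ind (t < count_list x True)" if t: "t < n" for t
    proof -
      have "x \<notin> Bad t" using x t by (auto simp: G_def U_def)
      then have "x @ pad n t \<in> X t - snd (PB t)" using x by (auto simp: Bad_def X_def G_def)
      then have "Q t x = ind (circ_out CC (x @ pad n t))" using PB t by (auto simp: Q_def)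
      also have "circ_out CC (x @ pad n t) \<longleftrightarrow> x @ pad n t \<in> MAJ" using corr lx t N by simp
      also have "\<dots> \<longleftrightarrow> t < count_list x True" by (rule MAJ_pad[OF lx t])
      finally show ?thesis .
    qed
    have "count_list x True \<le> n" using count_len[of x] lx by simp
    then have "H x = (-1)^(count_list x True)"
      unfolding H_def using telescope3[of "count_list x True" n] Qx by simp
    then show "H x = ymon {..<n} x" using ymon_full_count[OF lx] by simp
  qed
  have GW: "G \<subseteq> Wn n" by (auto simp: G_def)
  have cG: "card G \<le> card (LS n (n div 2 + D))" by (rule smolensky_count[OF Hdeg GW HG])
  have LSb: "2 * card (LS n (n div 2 + D)) \<le> 4^m + 2*(D+1)*((2*m) choose m)"
    using LS_bound[of m D] by (simp add: n_def)
  have W: "(2::nat)^n = 4^m" by (simp add: n_def power_mult)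
  have iii: "4^m \<le> card G + card U"
  proof -
    have "card (Wn n) - card U \<le> card G" unfolding G_def by (rule diff_card_le_card_Diff[OF fU])
    then show ?thesis using card_Wn[of n] W by simp
  qed
  have ne: "CC \<noteq> []" using wf by (simp add: circ_wf_def)
  then have "s > 0" using sz by (cases CC) auto
  then have ns: "n * s > 0" using m1 by (simp add: n_def)
  have v: "((2*m) choose m)^2 * (2*m+1) \<le> (4^m)^2"
  proof -
    have "((4::nat)^m)^2 = 16^m" unfolding power2_eq_square power_mult_distrib[symmetric] by simp
    then show ?thesis using central_bound[of m] by simp
  qed
  show False
    apply (rule final_arith[of "card U" l n s "4^m" "card G" D "(2*m) choose m" m])
    using cU W A B cG LSb iii ns v by (simp_all add: n_def D_def)
qed



theorem MAJ_notin_AC0: "MAJ \<notin> AC0"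
proof
  assume "MAJ \<in> AC0"
  then obtain C d e where hC: "\<forall>n. circ_wf n (C n) \<and> circ_size (C n) \<le> n^e + e \<and> circ_depth (C n) \<le> d"
    and corr: "\<forall>w. circ_out (C (length w)) w \<longleftrightarrow> w \<in> MAJ" unfolding AC0_def by blast
  obtain m l where ml: "m \<ge> 1" "l \<ge> 1" "16*m*((4*m)^e+e) \<le> 2^l" "4*((2*l)^d+1)^2 \<le> m"
    using params by blast
  have sz: "length (C (4*m)) \<le> (4*m)^e + e" using hC length_le_size order_trans by blast
  have A: "8 * (2*m) * ((4*m)^e + e) \<le> 2^l" using ml(3) by simp
  have corr': "\<forall>w. length w = 4*m \<longrightarrow> (circ_out (C (4*m)) w \<longleftrightarrow> w \<in> MAJ)"
    using corr by metis
  show False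
    by (rule key[of m "C (4*m)" "(4*m)^e + e" d l]) (use hC sz corr' ml A in auto)
qed

theorem proposition3:
  shows "\<not> (T_sat_float \<subseteq> AC0) \<and> MAJ \<in> T_sat_float \<and> MAJ \<notin> AC0"
  using MAJ_in_T MAJ_notin_AC0 by blast

end
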